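(* Let $k$ be a field and $A$ a $k$-algebra with $\dim_k A\geq 4$. Then exactly one of the following holds: (i) there exist $x,y\in A$ such that $\dim_k(k1+kx+ky+kxy)\geq 4$; (ii) there exists a $k$-subspace $V$ of $A$ with $A=k1\oplus V$ and $V\cdot V=0$; (iii) there exists a $k$-subspace $V$ of $A$ and elements $e,f\in A$ with $A=ke\oplus kf\oplus V$, $V\cdot V=eV=Vf=0$, $e^2=e$, $f^2=f$, $ef=fe=0$, $e+f=1$; equivalently $A\simeq \begin{bmatrix} k & V\\ 0 & k\end{bmatrix}$.
   Context: Here a $k$-algebra means an associative unital $k$-algebra, not necessarily commutative (case (iii) is non-commutative). For subsets $X,Y\subseteq A$, $X\cdot Y$ denotes the set (span) of products $xy$ with $x\in X$, $y\in Y$. *)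

theory Defs
  imports Complex_Main
begin

text \<open>An associative unital algebra over a field: the ring structure is that of the
  type class ring_1 on 'b, and scale is a k-vector space structure on 'b compatible
  with multiplication (k-bilinearity of the product).\<close>
locale k_algebra = vector_space scale
  for scale :: "'a::field \<Rightarrow> 'b::ring_1 \<Rightarrow> 'b" +
  assumes scale_mult_left: "scale c (x * y) = scale c x * y"
      and scale_mult_right: "scale c (x * y) = x * scale c y"

definition fin_dim :: "('a::field \<Rightarrow> 'b::ring_1 \<Rightarrow> 'b) \<Rightarrow> bool" where
  "fin_dim scale \<longleftrightarrow> (\<exists>B. finite B \<and> module.span scale B = UNIV)"

text \<open>dim_k A \<ge> n, allowing infinite dimension (the library's dim is 0 in that case).\<close>
definition dim_ge :: "('a::field \<Rightarrow> 'b::ring_1 \<Rightarrow> 'b) \<Rightarrow> nat \<Rightarrow> bool" where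
  "dim_ge scale n \<longleftrightarrow> \<not> fin_dim scale \<or> vector_space.dim scale (UNIV :: 'b set) \<ge> n"

definition line :: "('a::field \<Rightarrow> 'b::ring_1 \<Rightarrow> 'b) \<Rightarrow> 'b \<Rightarrow> 'b set" where
  "line scale x = range (\<lambda>c. scale c x)"

definition direct_sum2 :: "'b::ring_1 set \<Rightarrow> 'b set \<Rightarrow> bool" where
  "direct_sum2 U W \<longleftrightarrow> (\<forall>a. \<exists>!p. fst p \<in> U \<and> snd p \<in> W \<and> a = fst p + snd p)"

definition direct_sum3 :: "'b::ring_1 set \<Rightarrow> 'b set \<Rightarrow> 'b set \<Rightarrow> bool" where
  "direct_sum3 U W V \<longleftrightarrow>
     (\<forall>a. \<exists>!t. fst t \<in> U \<and> fst (snd t) \<in> W \<and> snd (snd t) \<in> V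
              \<and> a = fst t + fst (snd t) + snd (snd t))"

end

theory Submission
  imports Defs
begin



context k_algebra begin

notation scale (infixr \<open>*s\<close> 75)

lemma sml[simp]: "(c *s x) * y = c *s (x*y)" using scale_mult_left by simp
lemma smr[simp]: "x * (c *s y) = c *s (x*y)" using scale_mult_right by simp

lemma span1: "x \<in> span {a} \<longleftrightarrow> (\<exists>p. x = p *s a)"
  by (auto simp: span_singleton)

lemma span2: "x \<in> span {a,b} \<longleftrightarrow> (\<exists>p q. x = p *s a + q *s b)"
  apply (simp add: span_breakdown_eq span_singleton)
  apply safe
   apply (force simp: algebra_simps)
  subgoal for p q by (rule exI[of _ p], rule image_eqI[of _ _ q]) auto
  done

lemma span3: "x \<in> span {a,b,c} \<longleftrightarrow> (\<exists>p q r. x = p *s a + q *s b + r *s c)"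
  apply (simp add: span_breakdown_eq span_singleton)
  apply safe
   apply (force simp: algebra_simps)
  subgoal for p q r by (rule exI[of _ p], rule exI[of _ q], rule image_eqI[of _ _ r]) (auto simp: algebra_simps)
  done

lemma ind3:
  assumes "a \<noteq> 0" "b \<notin> span {a}" "c \<notin> span {a,b}" "p *s a + q *s b + r *s c = 0"
  shows "p = 0 \<and> q = 0 \<and> r = 0"
proof -
  have r: "r = 0"
  proof (rule ccontr)
    assume "r \<noteq> 0"
    have "c = (- p / r) *s a + (- q / r) *s b"
    proof -
      have "r *s c = - (p *s a) - q *s b" using assms(4) by (simp add: algebra_simps eq_neg_iff_add_eq_0)
      hence "(1/r) *s (r *s c) = (1/r) *s (- (p *s a) - q *s b)" by simp
      thus ?thesis using \<open>r \<noteq> 0\<close> by (simp add: algebra_simps)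
    qed
    thus False using assms(3) span2 by blast
  qed
  have q: "q = 0"
  proof (rule ccontr)
    assume "q \<noteq> 0"
    have "q *s b = - (p *s a)" using assms(4) r by (simp add: algebra_simps eq_neg_iff_add_eq_0)
    hence "(1/q) *s (q *s b) = (1/q) *s (- (p *s a))" by simp
    hence "b = (- p / q) *s a" using \<open>q \<noteq> 0\<close> by (simp add: algebra_simps)
    thus False using assms(2) span1 by blast
  qed
  have "p = 0" using assms(1,4) r q by simp
  thus ?thesis using r q by simp
qed

lemma ind3_eq:
  assumes "a \<noteq> 0" "b \<notin> span {a}" "c \<notin> span {a,b}"
    "p *s a + q *s b + r *s c = p' *s a + q' *s b + r' *s c"
  shows "p = p' \<and> q = q' \<and> r = r'"
proof -
  have "(p - p') *s a + (q - q') *s b + (r - r') *s c = 0"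
    using assms(4) by (simp add: algebra_simps)
  from ind3[OF assms(1-3) this] show ?thesis by simp
qed


lemma D:
  assumes "dim_ge scale 4" shows "\<exists>z. z \<notin> span {a,b,c}"
proof (rule ccontr)
  assume "\<not> ?thesis" hence U: "span {a,b,c} = UNIV" by auto
  hence "fin_dim scale" unfolding fin_dim_def by (intro exI[of _ "{a,b,c}"]) simp
  have "dim (UNIV::'b set) \<le> card {a,b,c}" by (rule dim_le_card) (use U in auto)
  also have "card {a,b,c} \<le> 3" by (auto simp: card_insert_if)
  finally show False using assms \<open>fin_dim scale\<close> unfolding dim_ge_def by simp
qed

lemma N:
  assumes nP1: "\<forall>x y. \<not> 4 \<le> dim {1,x,y,x*y}" and x: "x \<notin> span {1}" and y: "y \<notin> span {1,x}"
  shows "x*y \<in> span {1,x,y}"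
proof (rule ccontr)
  assume xy: "x*y \<notin> span {1,x,y}"
  have i1: "independent {1}" by (rule independent_insertI) (use independent_empty in auto)
  have i2: "independent {x,1}" by (rule independent_insertI) (use x i1 in auto)
  have i3: "independent {y,x,1}" by (rule independent_insertI) (use y i2 in \<open>auto simp: insert_commute\<close>)
  have i4: "independent {x*y,y,x,1}" by (rule independent_insertI) (use xy i3 in \<open>auto simp: insert_commute\<close>)
  have "y \<in> span {1,x,y}" "x \<in> span {1,x,y}" "1 \<in> span {1,x,y}" "x \<in> span {1,x}" "1 \<in> span {1,x}"
    "1 \<in> span {1}" by (auto intro: span_base)
  hence d: "x*y \<noteq> y" "x*y \<noteq> x" "x*y \<noteq> 1" "y \<noteq> x" "y \<noteq> 1" "x \<noteq> 1"
    using xy x y by metis+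
  hence "card {x*y,y,x,1} = 4" by simp
  hence "dim {x*y,y,x,1} = 4" using dim_eq_card_independent[OF i4] by simp
  moreover have "{x*y,y,x,1} = {1,x,y,x*y}" by auto
  ultimately show False using nP1 by (metis order_refl)
qed

lemma in3I: "u = p *s a + q *s b + r *s c \<Longrightarrow> u \<in> span {a,b,c}" using span3 by blast
lemma in2I: "u = p *s a + q *s b \<Longrightarrow> u \<in> span {a,b}" using span2 by blast

lemma span_unscale: "C *s z \<in> span S \<Longrightarrow> C \<noteq> 0 \<Longrightarrow> z \<in> span S"
  using span_scale[of "C *s z" S "1/C"] by simp

lemma Q:
  assumes D: "\<And>a b c. \<exists>z. z \<notin> span {a,b,c}"
    and nP1: "\<forall>x y. \<not> 4 \<le> dim {1,x,y,x*y}"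
  shows "x*x \<in> span {1,x}"
proof (cases "x \<in> span {1}")
  case True
  then obtain p where "x = p *s 1" using span1 by blast
  hence "x*x = 0 *s 1 + p *s x" by simp
  thus ?thesis by (rule in2I)
next
  case False
  obtain y where y0: "y \<notin> span {1,x,x}" using D by blast
  hence y: "y \<notin> span {1,x}" by simp
  obtain z where z: "z \<notin> span {1,x,y}" using D by blast
  have z': "z \<notin> span {1,x}" using z span_mono[of "{1,x}" "{1,x,y}"] by auto
  have xy: "x*y \<in> span {1,x,y}" by (rule N[OF nP1 False y])
  have xz: "x*z \<in> span {1,x,z}" by (rule N[OF nP1 False z'])
  have "x+y \<notin> span {1,x}"
  proof
    assume "x+y \<in> span {1,x}"
    then obtain p q where "x + y = p *s 1 + q *s x" using span2 by blast
    hence "y = p *s 1 + (q - 1) *s x" by (simp add: algebra_simps)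
    thus False using y span2 by blast
  qed
  hence xy2: "x*(x+y) \<in> span {1,x,x+y}" by (rule N[OF nP1 False])
  have "x+z \<notin> span {1,x}"
  proof
    assume "x+z \<in> span {1,x}"
    then obtain p q where "x + z = p *s 1 + q *s x" using span2 by blast
    hence "z = p *s 1 + (q - 1) *s x" by (simp add: algebra_simps)
    thus False using z' span2 by blast
  qed
  hence xz2: "x*(x+z) \<in> span {1,x,x+z}" by (rule N[OF nP1 False])
  obtain a1 b1 c1 where e1: "x*(x+y) = a1 *s 1 + b1 *s x + c1 *s (x+y)" using xy2 span3 by blast
  obtain a2 b2 c2 where e2: "x*y = a2 *s 1 + b2 *s x + c2 *s y" using xy span3 by blast
  obtain a3 b3 c3 where e3: "x*(x+z) = a3 *s 1 + b3 *s x + c3 *s (x+z)" using xz2 span3 by blast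
  obtain a4 b4 c4 where e4: "x*z = a4 *s 1 + b4 *s x + c4 *s z" using xz span3 by blast
  have E1: "x*x = (a1-a2) *s 1 + (b1+c1-b2) *s x + (c1-c2) *s y"
    using e1 e2 by (simp add: algebra_simps)
  have E2: "x*x = (a3-a4) *s 1 + (b3+c3-b4) *s x + (c3-c4) *s z"
    using e3 e4 by (simp add: algebra_simps)
  have "c3 - c4 = 0"
  proof (rule ccontr)
    assume C: "c3 - c4 \<noteq> 0"
    define C where "C = c3 - c4"
    have "C *s z = (a1-a2-(a3-a4)) *s 1 + (b1+c1-b2-(b3+c3-b4)) *s x + (c1-c2) *s y"
      using E1 E2 unfolding C_def by (simp add: algebra_simps)
    hence "C *s z \<in> span {1,x,y}" by (rule in3I)
    hence "z \<in> span {1,x,y}" using span_unscale C unfolding C_def by blast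
    thus False using z by blast
  qed
  hence "x*x = (a3-a4) *s 1 + (b3+c3-b4) *s x" using E2 by simp
  thus ?thesis by (rule in2I)
qed

lemma star:
  assumes D: "\<And>a b c. \<exists>z. z \<notin> span {a,b,c}"
    and nP1: "\<forall>x y. \<not> 4 \<le> dim {1,x,y,x*y}"
  shows "x*y \<in> span {1,x,y}"
proof (cases "x \<in> span {1}")
  case True
  then obtain p where "x = p *s 1" using span1 by blast
  hence "x*y = 0 *s 1 + 0 *s x + p *s y" by simp
  thus ?thesis by (rule in3I)
next
  case False
  show ?thesis
  proof (cases "y \<in> span {1,x}")
    case True
    then obtain p q where yy: "y = p *s 1 + q *s x" using span2 by blast
    obtain a b where xx: "x*x = a *s 1 + b *s x" using Q[OF D nP1, of x] span2 by blast
    have "x*y = (q*a) *s 1 + (p + q*b) *s x + 0 *s y"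
      unfolding yy by (simp add: algebra_simps xx)
    thus ?thesis by (rule in3I)
  next
    case False2: False
    show ?thesis by (rule N[OF nP1 False False2])
  qed
qed


end


context k_algebra begin
lemma nil_prod:
  fixes n m :: 'b
  assumes star: "\<And>x y. x*y \<in> span {1,x,y}" and nn: "n*n = 0" and mm: "m*m = 0"
  shows "n*m = 0"
proof -
  obtain a b c where e: "n*m = a *s 1 + b *s n + c *s m" using star span3 by blast
  have nn': "\<And>z. n*(n*z) = 0" using nn by (simp add: mult.assoc[symmetric])
  have h1: "n*((n*m)*m) = 0" using nn' by (simp add: mult.assoc mm)
  have "n*((n*m)*m) = a *s (n*m)" by (subst e) (simp add: algebra_simps nn nn' mm)
  hence h1': "a *s (n*m) = 0" using h1 by simp
  have "n*(n*m) = a *s n + c *s (n*m)" by (subst e) (simp add: algebra_simps nn nn' mm)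
  hence h2: "a *s n + c *s (n*m) = 0" using nn' by simp
  have "(n*m)*m = a *s m + b *s (n*m)" by (subst e) (simp add: algebra_simps nn nn' mm)
  hence h3: "a *s m + b *s (n*m) = 0" using mm by (simp add: mult.assoc)
  show ?thesis
  proof (cases "a = 0")
    case False thus ?thesis using h1' by simp
  next
    case True
    show ?thesis
    proof (cases "b = 0")
      case False thus ?thesis using h3 True by simp
    next
      case b: True
      show ?thesis
      proof (cases "c = 0")
        case False thus ?thesis using h2 True by simp
      next
        case True thus ?thesis using e b \<open>a = 0\<close> by simp
      qed
    qed
  qed
qed

lemma sqroot:
  assumes star: "\<And>x y. x*y \<in> span {1,x,y}" and D: "\<And>a b c. \<exists>z. z \<notin> span {a,b,c}"
    and x: "x \<notin> span {1}" and noid: "\<And>e. e*e = e \<Longrightarrow> e \<in> span {1}"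
  shows "\<exists>g. (x - g *s 1)*(x - g *s 1) = 0"
proof -
  obtain a b where xx: "x*x = a *s 1 + b *s x" using star[of x x] span2 by auto
  obtain y where y0: "y \<notin> span {1,x,x}" using D by blast
  hence y: "y \<notin> span {1,x}" by simp
  obtain \<alpha> \<beta> \<gamma> where xy: "x*y = \<alpha> *s 1 + \<beta> *s x + \<gamma> *s y" using star span3 by blast
  define \<mu> where "\<mu> = b - \<gamma>"
  have P: "(x - \<mu> *s 1)*(x - \<gamma> *s 1) = (a + \<mu>*\<gamma>) *s 1"
    by (simp add: algebra_simps xx \<mu>_def)
  have Q: "(x - \<gamma> *s 1)*y = \<alpha> *s 1 + \<beta> *s x" using xy by (simp add: algebra_simps)
  have "(a + \<mu>*\<gamma>) *s y = (x - \<mu> *s 1)*((x - \<gamma> *s 1)*y)"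
    by (simp add: mult.assoc[symmetric] P)
  also have "\<dots> = (\<beta>*a - \<mu>*\<alpha>) *s 1 + (\<alpha> + \<beta>*b - \<mu>*\<beta>) *s x"
    unfolding Q by (simp add: algebra_simps xx)
  finally have "(a + \<mu>*\<gamma>) *s y \<in> span {1,x}" by (rule in2I)
  hence m0: "a + \<mu>*\<gamma> = 0" using y span_unscale by blast
  hence P0: "(x - \<mu> *s 1)*(x - \<gamma> *s 1) = 0" using P by simp
  show ?thesis
  proof (cases "\<mu> = \<gamma>")
    case True thus ?thesis using P0 by blast
  next
    case False
    define d where "d = \<gamma> - \<mu>"
    have d: "d \<noteq> 0" using False d_def by simp
    define e where "e = (1/d) *s (x - \<mu> *s 1)"
    have "(x - \<mu> *s 1)*(x - \<mu> *s 1) = (x - \<mu> *s 1)*(x - \<gamma> *s 1) + d *s (x - \<mu> *s 1)"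
      unfolding d_def by (simp add: algebra_simps)
    hence sq: "(x - \<mu> *s 1)*(x - \<mu> *s 1) = d *s (x - \<mu> *s 1)" using P0 by simp
    have "e*e = e" unfolding e_def using d by (simp add: sq power2_eq_square)
    hence "e \<in> span {1}" by (rule noid)
    then obtain p where "e = p *s 1" using span1 by blast
    hence "d *s e = (d*p) *s 1" by simp
    hence "x - \<mu> *s 1 = (d*p) *s 1" unfolding e_def using d by simp
    hence "x = (d*p + \<mu>) *s 1" by (simp add: algebra_simps)
    hence False using x span1 by blast
    thus ?thesis ..
  qed
qed

lemma caseA:
  assumes star: "\<And>x y. x*y \<in> span {1,x,y}" and D: "\<And>a b c. \<exists>z. z \<notin> span {a,b,c}"
    and noid: "\<And>e. e*e = e \<Longrightarrow> e \<in> span {1}"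
  shows "\<exists>V::'b set. subspace V \<and> direct_sum2 (line scale 1) V \<and> (\<forall>v\<in>V. \<forall>w\<in>V. v * w = 0)"
proof -
  define V :: "'b set" where "V = {n. n*n = 0}"
  have NP: "\<And>v w::'b. v*v = 0 \<Longrightarrow> w*w = 0 \<Longrightarrow> v*w = 0" using nil_prod[OF star] by blast
  have VV: "\<forall>v\<in>V. \<forall>w\<in>V. v * w = 0" unfolding V_def using NP by simp
  have dec: "\<exists>g n. x = g *s 1 + n \<and> n \<in> V" for x
  proof (cases "x \<in> span {1}")
    case True
    then obtain p where "x = p *s 1" using span1 by blast
    thus ?thesis unfolding V_def by (intro exI[of _ p] exI[of _ 0]) simp
  next
    case False
    then obtain g where "(x - g *s 1)*(x - g *s 1) = 0" using sqroot[OF star D _ noid] by blast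
    thus ?thesis unfolding V_def by (intro exI[of _ g] exI[of _ "x - g *s 1"]) simp
  qed
  have sub: "subspace V"
  proof (rule subspaceI)
    show "0 \<in> V" unfolding V_def by simp
  next
    fix x y assume "x \<in> V" "y \<in> V"
    hence xx: "x*x = 0" "y*y = 0" unfolding V_def by auto
    hence "x*x = 0" "y*y = 0" "x*y = 0" "y*x = 0" using NP by auto
    thus "x + y \<in> V" unfolding V_def by (simp add: algebra_simps)
  next
    fix c x assume "x \<in> V" thus "c *s x \<in> V" unfolding V_def by simp
  qed
  have ds: "direct_sum2 (line scale 1) V"
    unfolding direct_sum2_def line_def
  proof
    fix a
    obtain g n where a: "a = g *s 1 + n" and n: "n \<in> V" using dec by blast
    show "\<exists>!p. fst p \<in> range (\<lambda>c. c *s 1) \<and> snd p \<in> V \<and> a = fst p + snd p"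
    proof (rule ex1I[of _ "(g *s 1, n)"])
      show "fst (g *s 1, n) \<in> range (\<lambda>c. c *s 1) \<and> snd (g *s 1, n) \<in> V \<and> a = fst (g *s 1, n) + snd (g *s 1, n)"
        using a n by auto
    next
      fix p assume p: "fst p \<in> range (\<lambda>c. c *s 1) \<and> snd p \<in> V \<and> a = fst p + snd p"
      then obtain c where c: "fst p = c *s 1" by auto
      define m where "m = snd p"
      have mV: "m \<in> V" using p m_def by auto
      define d where "d = g - c"
      have m: "m = d *s 1 + n" using p a c unfolding m_def d_def by (simp add: algebra_simps)
      have mm: "m*m = 0" and nn: "n*n = 0" using mV n unfolding V_def by auto
      have mn: "m*n = 0" using NP mm nn by blast
      have dn: "d *s n = 0" using mn nn unfolding m by (simp add: algebra_simps)
      have "m*m = (d*d) *s 1" unfolding m by (simp add: algebra_simps nn dn)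
      hence "d = 0" using mm by simp
      hence "c = g" "m = n" using m d_def by auto
      thus "p = (g *s 1, n)" using c m_def by (simp add: prod_eq_iff)
    qed
  qed
  show ?thesis using sub ds VV by blast
qed

end


context k_algebra begin

lemma fix_pt: "u = v + c *s u \<Longrightarrow> c \<noteq> 1 \<Longrightarrow> v \<in> span S \<Longrightarrow> u \<in> span S"
proof -
  assume u: "u = v + c *s u" and c: "c \<noteq> 1" and v: "v \<in> span S"
  have "(1 - c) *s u = u - c *s u" by (simp add: algebra_simps)
  also have "\<dots> = v" by (subst (1) u) simp
  finally have "(1 - c) *s u \<in> span S" using v by simp
  thus ?thesis using span_unscale c by simp
qed

lemma TL:
  assumes star: "\<And>x y. x*y \<in> span {1,x,y}" and ee: "e*e = e"
  shows "e*y \<in> span {1,e} \<or> (1-e)*y \<in> span {1,e}"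
proof -
  obtain a b c where h: "e*y = a *s 1 + b *s e + c *s y" using star span3 by blast
  show ?thesis
  proof (cases "c = 1")
    case True
    have "(1-e)*y = (-a) *s 1 + (-b) *s e" using h True by (simp add: algebra_simps)
    thus ?thesis using in2I by blast
  next
    case False
    have "e*y = e*(e*y)" by (simp add: mult.assoc[symmetric] ee)
    also have "\<dots> = (a *s e + b *s e) + c *s (e*y)" by (subst h) (simp add: algebra_simps ee)
    finally have E: "e*y = (0 *s 1 + (a + b) *s e) + c *s (e*y)" by (simp add: algebra_simps)
    have "0 *s 1 + (a + b) *s e \<in> span {1,e}" by (rule in2I[where p=0 and q="a+b"]) simp
    with E False have "e*y \<in> span {1,e}" by (rule fix_pt)
    thus ?thesis ..
  qed
qed

lemma TR:
  assumes star: "\<And>x y. x*y \<in> span {1,x,y}" and ee: "e*e = e"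
  shows "y*e \<in> span {1,e} \<or> y*(1-e) \<in> span {1,e}"
proof -
  obtain a b c where h: "y*e = a *s 1 + b *s y + c *s e" using star span3 by blast
  show ?thesis
  proof (cases "b = 1")
    case True
    have "y*(1-e) = (-a) *s 1 + (-c) *s e" using h True by (simp add: algebra_simps)
    thus ?thesis using in2I by blast
  next
    case False
    have "y*e = (y*e)*e" by (simp add: mult.assoc ee)
    also have "\<dots> = (a *s e + c *s e) + b *s (y*e)" by (subst h) (simp add: algebra_simps ee)
    finally have E: "y*e = (0 *s 1 + (a + c) *s e) + b *s (y*e)" by (simp add: algebra_simps)
    have "0 *s 1 + (a + c) *s e \<in> span {1,e}" by (rule in2I[where p=0 and q="a+c"]) simp
    with E False have "y*e \<in> span {1,e}" by (rule fix_pt)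
    thus ?thesis ..
  qed
qed

lemma uniform:
  assumes "\<And>y. P y \<or> Q y" "\<And>y z. P (y+z) \<Longrightarrow> P z \<Longrightarrow> P y" "\<And>y z. Q (y+z) \<Longrightarrow> Q y \<Longrightarrow> Q z"
  shows "(\<forall>y. P y) \<or> (\<forall>y. Q y)"
proof (rule ccontr)
  assume "\<not> ?thesis"
  then obtain y1 y2 where n: "\<not> P y1" "\<not> Q y2" by blast
  hence "Q y1" "P y2" using assms(1) by blast+
  thus False using assms(1)[of "y1+y2"] assms(2,3) n by blast
qed

lemma clos_l: "a*(y+z) \<in> span S \<Longrightarrow> a*z \<in> span S \<Longrightarrow> a*y \<in> span S"
  using span_diff[of "a*(y+z)" S "a*z"] by (simp add: distrib_left)
lemma clos_r: "(y+z)*a \<in> span S \<Longrightarrow> z*a \<in> span S \<Longrightarrow> y*a \<in> span S"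
  using span_diff[of "(y+z)*a" S "z*a"] by (simp add: distrib_right)

end


context k_algebra begin

lemma L0:
  assumes ee: "e*e = e" and ef: "e*f = 0" and ef1: "e + f = 1" and h: "e*y \<in> span {1,e}"
  shows "e*y*f = 0" "e*y*e \<in> span {e}"
proof -
  obtain p q where h': "e*y = p *s 1 + q *s e" using h span2 by blast
  have "e*y*f = (p *s 1 + q *s e)*f" using h' by simp
  also have "\<dots> = p *s f" by (simp add: algebra_simps ef)
  finally have a: "e*y*f = p *s f" .
  have "e*y*f = e*(e*y*f)" by (simp add: mult.assoc[symmetric] ee)
  also have "\<dots> = 0" unfolding a by (simp add: ef)
  finally show "e*y*f = 0" .
  have "e*y*e = (p *s 1 + q *s e)*e" using h' by simp
  also have "\<dots> = (p + q) *s e" by (simp add: algebra_simps ee)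
  finally show "e*y*e \<in> span {e}" using span1 by blast
qed

lemma L1:
  assumes ee: "e*e = e" and ff: "f*f = f" and ef: "e*f = 0" and fe: "f*e = 0" and h: "f*y \<in> span {1,e}"
  shows "f*y*e = 0" "f*y*f \<in> span {f}"
proof -
  obtain p q where h': "f*y = p *s 1 + q *s e" using h span2 by blast
  have "f*y*e = (p *s 1 + q *s e)*e" using h' by simp
  also have "\<dots> = (p + q) *s e" by (simp add: algebra_simps ee)
  finally have a: "f*y*e = (p + q) *s e" .
  have "f*y*e = f*(f*y*e)" by (simp add: mult.assoc[symmetric] ff)
  also have "\<dots> = 0" unfolding a by (simp add: fe)
  finally show "f*y*e = 0" .
  have "f*y*f = (p *s 1 + q *s e)*f" using h' by simp
  also have "\<dots> = p *s f" by (simp add: algebra_simps ef)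
  finally show "f*y*f \<in> span {f}" using span1 by blast
qed

lemma R0:
  assumes ee: "e*e = e" and fe: "f*e = 0" and h: "y*e \<in> span {1,e}"
  shows "f*y*e = 0" "e*y*e \<in> span {e}"
proof -
  obtain p q where h': "y*e = p *s 1 + q *s e" using h span2 by blast
  have "f*y*e = f*(p *s 1 + q *s e)" using h' by (simp add: mult.assoc)
  also have "\<dots> = p *s f" by (simp add: algebra_simps fe)
  finally have a: "f*y*e = p *s f" .
  have "f*y*e = (f*y*e)*e" by (simp add: mult.assoc ee)
  also have "\<dots> = 0" unfolding a by (simp add: fe)
  finally show "f*y*e = 0" .
  have "e*y*e = e*(p *s 1 + q *s e)" using h' by (simp add: mult.assoc)
  also have "\<dots> = (p + q) *s e" by (simp add: algebra_simps ee)
  finally show "e*y*e \<in> span {e}" using span1 by blast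
qed

lemma R1:
  assumes ee: "e*e = e" and ff: "f*f = f" and ef: "e*f = 0" and fe: "f*e = 0" and h: "y*f \<in> span {1,e}"
  shows "e*y*f = 0" "f*y*f \<in> span {f}"
proof -
  obtain p q where h': "y*f = p *s 1 + q *s e" using h span2 by blast
  have "e*y*f = e*(p *s 1 + q *s e)" using h' by (simp add: mult.assoc)
  also have "\<dots> = (p + q) *s e" by (simp add: algebra_simps ee)
  finally have a: "e*y*f = (p + q) *s e" .
  have "e*y*f = (e*y*f)*f" by (simp add: mult.assoc ff)
  also have "\<dots> = 0" unfolding a by (simp add: ef)
  finally show "e*y*f = 0" .
  have "f*y*f = f*(p *s 1 + q *s e)" using h' by (simp add: mult.assoc)
  also have "\<dots> = p *s f" by (simp add: algebra_simps fe)
  finally show "f*y*f \<in> span {f}" using span1 by blast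
qed

lemma aux3: "(x::'b) = u + v + w \<Longrightarrow> x - u - v = w" by (simp add: algebra_simps)

lemma structP3:
  assumes ee: "e*e = e" and ff: "f*f = f" and ef: "e*f = 0" and fe: "f*e = 0" and ef1: "e + f = 1"
    and A1: "\<And>y. e*y*f = 0" and A2: "\<And>y. e*y*e \<in> span {e}" and A3: "\<And>y. f*y*f \<in> span {f}"
  shows "subspace (range (\<lambda>y. f*y*e)) \<and> direct_sum3 (line scale e) (line scale f) (range (\<lambda>y. f*y*e))
     \<and> (\<forall>v\<in>range (\<lambda>y. f*y*e). \<forall>w\<in>range (\<lambda>y. f*y*e). v*w = 0)
     \<and> (\<forall>v\<in>range (\<lambda>y. f*y*e). e*v = 0) \<and> (\<forall>v\<in>range (\<lambda>y. f*y*e). v*f = 0)"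
proof -
  define V where "V = range (\<lambda>y. f*y*e)"
  have ee': "\<And>z. e*(e*z) = e*z" and ff': "\<And>z. f*(f*z) = f*z" and ef': "\<And>z. e*(f*z) = 0"
    and fe': "\<And>z. f*(e*z) = 0"
    by (simp_all add: mult.assoc[symmetric] ee ff ef fe)
  have A1': "\<And>y. e*(y*f) = 0" using A1 by (simp add: mult.assoc)
  have sub: "subspace V"
  proof (rule subspaceI)
    show "0 \<in> V" unfolding V_def by (rule image_eqI[of _ _ 0]) simp_all
  next
    fix x y assume "x \<in> V" "y \<in> V"
    then obtain y1 y2 where "x = f*y1*e" "y = f*y2*e" unfolding V_def by blast
    hence "x + y = f*(y1+y2)*e" by (simp add: algebra_simps)
    thus "x + y \<in> V" unfolding V_def by blast
  next
    fix c x assume "x \<in> V"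
    then obtain y1 where "x = f*y1*e" unfolding V_def by blast
    hence "c *s x = f*(c *s y1)*e" by simp
    thus "c *s x \<in> V" unfolding V_def by blast
  qed
  have VV: "\<forall>v\<in>V. \<forall>w\<in>V. v*w = 0" unfolding V_def by (auto simp: mult.assoc ef')
  have eV: "\<forall>v\<in>V. e*v = 0" unfolding V_def by (auto simp: mult.assoc ef')
  have Vf: "\<forall>v\<in>V. v*f = 0" unfolding V_def by (auto simp: mult.assoc ef)
  have dec: "a = e*a*e + f*a*f + f*a*e" for a
  proof -
    have "a = (e+f)*a*(e+f)" using ef1 by simp
    also have "\<dots> = e*a*e + f*a*f + f*a*e + e*a*f" by (simp add: algebra_simps)
    finally show ?thesis using A1[of a] by simp
  qed
  have ds: "direct_sum3 (line scale e) (line scale f) V"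
    unfolding direct_sum3_def line_def
  proof
    fix a
    show "\<exists>!t. fst t \<in> range (\<lambda>c. c *s e) \<and> fst (snd t) \<in> range (\<lambda>c. c *s f) \<and> snd (snd t) \<in> V
              \<and> a = fst t + fst (snd t) + snd (snd t)"
    proof (rule ex1I[of _ "(e*a*e, f*a*f, f*a*e)"])
      obtain p where p: "e*a*e = p *s e" using A2 span1 by blast
      obtain q where q: "f*a*f = q *s f" using A3 span1 by blast
      show "fst (e*a*e, f*a*f, f*a*e) \<in> range (\<lambda>c. c *s e) \<and> fst (snd (e*a*e, f*a*f, f*a*e)) \<in> range (\<lambda>c. c *s f)
         \<and> snd (snd (e*a*e, f*a*f, f*a*e)) \<in> V \<and> a = fst (e*a*e, f*a*f, f*a*e) + fst (snd (e*a*e, f*a*f, f*a*e)) + snd (snd (e*a*e, f*a*f, f*a*e))"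
        using p q dec[of a] unfolding V_def by auto
    next
      fix t assume t: "fst t \<in> range (\<lambda>c. c *s e) \<and> fst (snd t) \<in> range (\<lambda>c. c *s f) \<and> snd (snd t) \<in> V
              \<and> a = fst t + fst (snd t) + snd (snd t)"
      then obtain p q y where tp: "fst t = p *s e" and tq: "fst (snd t) = q *s f" and ty: "snd (snd t) = f*y*e"
        unfolding V_def by blast
      have at: "a = p *s e + q *s f + f*y*e" using t tp tq ty by simp
      have 1: "e*a*e = p *s e" unfolding at by (simp add: algebra_simps ee ee' ef' fe' ef fe)
      have 2: "f*a*f = q *s f" unfolding at by (simp add: algebra_simps ff ff' ef' fe' ef fe)
      have "snd (snd t) = a - p *s e - q *s f" using at ty by simp
      also have "\<dots> = a - e*a*e - f*a*f" using 1 2 by simp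
      also have "\<dots> = f*a*e" using dec[of a] by (rule aux3)
      finally have 3: "snd (snd t) = f*a*e" .
      show "t = (e*a*e, f*a*f, f*a*e)" using 1 2 3 tp tq by (simp add: prod_eq_iff)
    qed
  qed
  show ?thesis using sub ds VV eV Vf unfolding V_def by blast
qed

end


context k_algebra begin

lemma G:
  assumes star: "\<And>x y. x*y \<in> span {1,x,y}" and ef1: "e + f = 1" and ff: "f*f = f" and f0: "f \<noteq> 0"
    and e0: "e \<noteq> 0" and b: "b \<notin> span {e}" and c: "c \<notin> span {e,b}"
    and bf: "b*f = 0" and fc: "f*c = 0" and cf: "c*f = 0"
  shows "\<exists>\<alpha>. b*c = \<alpha> *s e + (-\<alpha>) *s b + (-\<alpha>) *s c"
proof -
  have one: "\<And>a. a *s (1::'b) = a *s e + a *s f" using ef1 by (metis scale_right_distrib)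
  obtain \<alpha> \<beta> \<gamma> where h1: "(b+f)*c = \<alpha> *s 1 + \<beta> *s (b+f) + \<gamma> *s c" using star span3 by blast
  have bc1: "b*c = \<alpha> *s 1 + \<beta> *s (b+f) + \<gamma> *s c" using h1 fc by (simp add: distrib_right)
  have "0 = (b*c)*f" by (simp add: mult.assoc cf)
  also have "\<dots> = (\<alpha> + \<beta>) *s f" unfolding bc1 by (simp add: algebra_simps bf ff cf)
  finally have "\<alpha> + \<beta> = 0" using f0 by simp
  hence \<beta>: "\<beta> = - \<alpha>" by (metis neg_eq_iff_add_eq_0)
  have E1: "b*c = \<alpha> *s e + (-\<alpha>) *s b + \<gamma> *s c" unfolding bc1 \<beta> by (simp add: algebra_simps one)
  obtain \<alpha>' \<beta>' \<gamma>' where h2: "b*(c+f) = \<alpha>' *s 1 + \<beta>' *s b + \<gamma>' *s (c+f)" using star span3 by blast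
  have bc2: "b*c = \<alpha>' *s 1 + \<beta>' *s b + \<gamma>' *s (c+f)" using h2 bf by (simp add: distrib_left)
  have "0 = (b*c)*f" by (simp add: mult.assoc cf)
  also have "\<dots> = (\<alpha>' + \<gamma>') *s f" unfolding bc2 by (simp add: algebra_simps bf ff cf)
  finally have "\<alpha>' + \<gamma>' = 0" using f0 by simp
  hence \<gamma>: "\<gamma>' = - \<alpha>'" by (simp add: eq_neg_iff_add_eq_0 add.commute)
  have E2: "b*c = \<alpha>' *s e + \<beta>' *s b + (-\<alpha>') *s c" unfolding bc2 \<gamma> by (simp add: algebra_simps one)
  have "\<alpha> *s e + (-\<alpha>) *s b + \<gamma> *s c = \<alpha>' *s e + \<beta>' *s b + (-\<alpha>') *s c" using E1 E2 by simp
  from ind3_eq[OF e0 b c this] have "\<alpha> = \<alpha>'" "\<gamma> = -\<alpha>'" by auto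
  thus ?thesis using E1 by auto
qed

lemma contra_B:
  assumes star: "\<And>x y. x*y \<in> span {1,x,y}" and D: "\<And>a b c. \<exists>z. z \<notin> span {a,b,c}"
    and ee: "e*e = e" and ff: "f*f = f" and ef: "e*f = 0" and fe: "f*e = 0" and ef1: "e + f = 1"
    and A1: "\<And>y. e*y*f = 0" and A2: "\<And>y. f*y*e = 0" and A3: "\<And>y. f*y*f \<in> span {f}"
    and e0: "e \<noteq> 0" and f0: "f \<noteq> 0"
  shows False
proof -
  have dec: "y = e*y*e + f*y*f" for y
  proof -
    have "y = (e+f)*y*(e+f)" using ef1 by simp
    also have "\<dots> = e*y*e + f*y*f + f*y*e + e*y*f" by (simp add: algebra_simps)
    finally show ?thesis using A1[of y] A2[of y] by simp
  qed
  have ee': "\<And>z. e*(e*z) = e*z" and ff': "\<And>z. f*(f*z) = f*z" and ef': "\<And>z. e*(f*z) = 0"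
    and fe': "\<And>z. f*(e*z) = 0"
    by (simp_all add: mult.assoc[symmetric] ee ff ef fe)
  have bprops: "(e*z*e)*f = 0" "f*(e*z*e) = 0" "e*(e*z*e) = e*z*e" for z
    by (simp_all add: mult.assoc ef fe' ee')
  obtain z1 where z1: "z1 \<notin> span {e,f,e}" using D by blast
  hence z1': "z1 \<notin> span {e,f}" by (simp add: insert_commute)
  define b1 where "b1 = e*z1*e"
  have b1: "b1 \<notin> span {e,f}"
  proof
    assume "b1 \<in> span {e,f}"
    then obtain p q where pq: "b1 = p *s e + q *s f" using span2 by blast
    obtain r where r: "f*z1*f = r *s f" using A3 span1 by blast
    have "z1 = p *s e + (q + r) *s f" using dec[of z1] pq r unfolding b1_def by (simp add: algebra_simps)
    thus False using z1' span2 by blast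
  qed
  obtain z2 where z2: "z2 \<notin> span {e,f,b1}" using D by blast
  define b2 where "b2 = e*z2*e"
  have b2: "b2 \<notin> span {e,f,b1}"
  proof
    assume "b2 \<in> span {e,f,b1}"
    then obtain p q s where pq: "b2 = p *s e + q *s f + s *s b1" using span3 by blast
    obtain r where r: "f*z2*f = r *s f" using A3 span1 by blast
    have "z2 = p *s e + (q + r) *s f + s *s b1" using dec[of z2] pq r unfolding b2_def by (simp add: algebra_simps)
    thus False using z2 span3 by blast
  qed
  have b1e: "b1 \<notin> span {e}" using b1 span_mono[of "{e}" "{e,f}"] by blast
  have b2e: "b2 \<notin> span {e,b1}" using b2 span_mono[of "{e,b1}" "{e,f,b1}"] by blast
  have b1f: "b1*f = 0" and b2f: "b2*f = 0" and fb2: "f*b2 = 0" and eb2: "e*b2 = b2"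
    unfolding b1_def b2_def using bprops by auto
  obtain \<alpha> where g1: "b1*b2 = \<alpha> *s e + (-\<alpha>) *s b1 + (-\<alpha>) *s b2"
    using G[OF star ef1 ff f0 e0 b1e b2e b1f fb2 b2f] by blast
  have b1e': "b1 + e \<notin> span {e}"
  proof
    assume "b1 + e \<in> span {e}"
    then obtain p where "b1 + e = p *s e" using span1 by blast
    hence "b1 = (p - 1) *s e" by (simp add: algebra_simps)
    thus False using b1e span1 by blast
  qed
  have b2e': "b2 \<notin> span {e, b1 + e}"
  proof
    assume "b2 \<in> span {e, b1 + e}"
    then obtain p q where "b2 = p *s e + q *s (b1 + e)" using span2 by blast
    hence "b2 = (p + q) *s e + q *s b1" by (simp add: algebra_simps)
    thus False using b2e span2 by blast
  qed
  have b1ef: "(b1 + e)*f = 0" using b1f ef by (simp add: distrib_right)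
  obtain \<alpha>' where g2: "(b1 + e)*b2 = \<alpha>' *s e + (-\<alpha>') *s (b1 + e) + (-\<alpha>') *s b2"
    using G[OF star ef1 ff f0 e0 b1e' b2e' b1ef fb2 b2f] by blast
  have "\<alpha> *s e + (-\<alpha>) *s b1 + (1 - \<alpha>) *s b2 = b1*b2 + b2" unfolding g1 by (simp add: algebra_simps)
  also have "\<dots> = (b1 + e)*b2" using eb2 by (simp add: distrib_right)
  also have "\<dots> = 0 *s e + (-\<alpha>') *s b1 + (-\<alpha>') *s b2" unfolding g2 by (simp add: algebra_simps)
  finally have "\<alpha> *s e + (-\<alpha>) *s b1 + (1 - \<alpha>) *s b2 = 0 *s e + (-\<alpha>') *s b1 + (-\<alpha>') *s b2" .
  from ind3_eq[OF e0 b1e b2e this] show False by auto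
qed

end


context k_algebra begin

lemma caseB:
  assumes star: "\<And>x y. x*y \<in> span {1,x,y}" and D: "\<And>a b c. \<exists>z. z \<notin> span {a,b,c}"
    and ee: "e*e = e" and en: "e \<notin> span {1}"
  shows "\<exists>(V::'b set) e f. subspace V \<and> direct_sum3 (line scale e) (line scale f) V
     \<and> (\<forall>v\<in>V. \<forall>w\<in>V. v*w = 0) \<and> (\<forall>v\<in>V. e*v = 0) \<and> (\<forall>v\<in>V. v*f = 0)
     \<and> e*e = e \<and> f*f = f \<and> e*f = 0 \<and> f*e = 0 \<and> e+f = 1"
proof -
  define f where "f = 1 - e"
  have ef1: "e + f = 1" and fe1: "f + e = 1" by (simp_all add: f_def)
  have ef: "e*f = 0" by (simp add: f_def algebra_simps ee)
  have fe: "f*e = 0" by (simp add: f_def algebra_simps ee)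
  have ff: "f*f = f" by (simp add: f_def algebra_simps ee)
  have e0: "e \<noteq> 0" using en span_zero by auto
  have f0: "f \<noteq> 0"
  proof
    assume "f = 0" hence "e = 1" using ef1 by simp
    thus False using en span_base[of 1 "{1}"] by simp
  qed
  have TLu: "(\<forall>y. e*y \<in> span {1,e}) \<or> (\<forall>y. f*y \<in> span {1,e})"
  proof (rule uniform[where P="\<lambda>y. e*y \<in> span {1,e}" and Q="\<lambda>y. f*y \<in> span {1,e}"])
    show "e*y \<in> span {1,e} \<or> f*y \<in> span {1,e}" for y using TL[OF star ee] f_def by blast
    show "e*y \<in> span {1,e}" if "e*(y+z) \<in> span {1,e}" "e*z \<in> span {1,e}" for y z
      using clos_l that by blast
    show "f*z \<in> span {1,e}" if "f*(y+z) \<in> span {1,e}" "f*y \<in> span {1,e}" for y z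
      using clos_l[of f z y] that by (simp add: add.commute)
  qed
  have TRu: "(\<forall>y. y*e \<in> span {1,e}) \<or> (\<forall>y. y*f \<in> span {1,e})"
  proof (rule uniform[where P="\<lambda>y. y*e \<in> span {1,e}" and Q="\<lambda>y. y*f \<in> span {1,e}"])
    show "y*e \<in> span {1,e} \<or> y*f \<in> span {1,e}" for y using TR[OF star ee] f_def by blast
    show "y*e \<in> span {1,e}" if "(y+z)*e \<in> span {1,e}" "z*e \<in> span {1,e}" for y z
      using clos_r that by blast
    show "z*f \<in> span {1,e}" if "(y+z)*f \<in> span {1,e}" "y*f \<in> span {1,e}" for y z
      using clos_r[of z y f] that by (simp add: add.commute)
  qed
  show ?thesis
  proof (cases "\<forall>y. e*y \<in> span {1,e}")
    case hL0: True
    have l1: "\<And>y. e*y*f = 0" and l2: "\<And>y. e*y*e \<in> span {e}"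
      using hL0 L0[OF ee ef ef1] by blast+
    show ?thesis
    proof (cases "\<forall>y. y*e \<in> span {1,e}")
      case hR0: True
      have r1: "\<And>y. f*y*e = 0" using hR0 R0[OF ee fe] by blast
      show ?thesis using contra_B[OF star D ff ee fe ef fe1 r1 l1 l2 f0 e0] by blast
    next
      case hR1: False
      hence hR1': "\<forall>y. y*f \<in> span {1,e}" using TRu by blast
      have r3: "\<And>y. f*y*f \<in> span {f}" using hR1' R1[OF ee ff ef fe] by blast
      show ?thesis using structP3[OF ee ff ef fe ef1 l1 l2 r3] ee ff ef fe ef1 by blast
    qed
  next
    case hL1: False
    hence hL1': "\<forall>y. f*y \<in> span {1,e}" using TLu by blast
    have l1: "\<And>y. f*y*e = 0" and l2: "\<And>y. f*y*f \<in> span {f}"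
      using hL1' L1[OF ee ff ef fe] by blast+
    show ?thesis
    proof (cases "\<forall>y. y*e \<in> span {1,e}")
      case hR0: True
      have r2: "\<And>y. e*y*e \<in> span {e}" using hR0 R0[OF ee fe] by blast
      show ?thesis using structP3[OF ff ee fe ef fe1 l1 l2 r2] ee ff ef fe fe1 by blast
    next
      case hR1: False
      hence hR1': "\<forall>y. y*f \<in> span {1,e}" using TRu by blast
      have r1: "\<And>y. e*y*f = 0" using hR1' R1[OF ee ff ef fe] by blast
      show ?thesis using contra_B[OF star D ee ff ef fe ef1 r1 l1 l2 e0 f0] by blast
    qed
  qed
qed

end


context k_algebra begin

lemma ds2_ex:
  assumes "direct_sum2 (line scale 1) V"
  shows "\<exists>c v. x = c *s 1 + v \<and> v \<in> V"
proof -
  obtain p where "fst p \<in> line scale 1" "snd p \<in> V" "x = fst p + snd p"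
    using assms unfolding direct_sum2_def by blast
  moreover then obtain c where "fst p = c *s 1" unfolding line_def by blast
  ultimately show ?thesis by (intro exI[of _ c] exI[of _ "snd p"]) simp
qed

lemma ds3_ex:
  assumes "direct_sum3 (line scale e) (line scale f) V"
  shows "\<exists>a b v. x = a *s e + b *s f + v \<and> v \<in> V"
proof -
  obtain t where "fst t \<in> line scale e" "fst (snd t) \<in> line scale f" "snd (snd t) \<in> V"
     "x = fst t + fst (snd t) + snd (snd t)"
    using assms unfolding direct_sum3_def by blast
  moreover then obtain a b where "fst t = a *s e" "fst (snd t) = b *s f" unfolding line_def by blast
  ultimately show ?thesis by (intro exI[of _ a] exI[of _ b] exI[of _ "snd (snd t)"]) simp
qed

lemma P2_star:
  assumes ds: "direct_sum2 (line scale 1) V" and VV: "\<forall>v\<in>V. \<forall>w\<in>V. v*w = 0"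
  shows "x*y \<in> span {1,x,y}"
proof -
  obtain a v where x: "x = a *s 1 + v" and v: "v \<in> V" using ds2_ex[OF ds] by blast
  obtain b w where y: "y = b *s 1 + w" and w: "w \<in> V" using ds2_ex[OF ds] by blast
  have vw: "v*w = 0" using VV v w by blast
  have "x*y = (-(a*b)) *s 1 + b *s x + a *s y"
    unfolding x y by (simp add: algebra_simps vw)
  thus ?thesis by (rule in3I)
qed

lemma P3_star:
  assumes ds: "direct_sum3 (line scale e) (line scale f) V" and VV: "\<forall>v\<in>V. \<forall>w\<in>V. v*w = 0"
    and eV: "\<forall>v\<in>V. e*v = 0" and Vf: "\<forall>v\<in>V. v*f = 0"
    and ee: "e*e = e" and ff: "f*f = f" and ef: "e*f = 0" and fe: "f*e = 0" and ef1: "e + f = 1"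
  shows "x*y \<in> span {1,x,y}"
proof -
  obtain a b v where x: "x = a *s e + b *s f + v" and v: "v \<in> V" using ds3_ex[OF ds] by blast
  obtain c d w where y: "y = c *s e + d *s f + w" and w: "w \<in> V" using ds3_ex[OF ds] by blast
  have vw: "v*w = 0" using VV v w by blast
  have ev: "e*v = 0" "e*w = 0" using eV v w by auto
  have vf: "v*f = 0" "w*f = 0" using Vf v w by auto
  have ve: "v*e = v" "w*e = w"
  proof -
    have "v = v*(e+f)" "w = w*(e+f)" using ef1 by simp_all
    thus "v*e = v" "w*e = w" using vf by (simp_all add: distrib_left)
  qed
  have fv: "f*v = v" "f*w = w"
  proof -
    have "v = (e+f)*v" "w = (e+f)*w" using ef1 by simp_all
    thus "f*v = v" "f*w = w" using ev by (simp_all add: distrib_right)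
  qed
  have one: "(-(b*c)) *s (1::'b) = (-(b*c)) *s e + (-(b*c)) *s f"
  proof -
    have "(-(b*c)) *s (1::'b) = (-(b*c)) *s (e + f)" by (simp add: ef1)
    thus ?thesis by (simp only: scale_right_distrib)
  qed
  have "x*y = (-(b*c)) *s e + (-(b*c)) *s f + b *s y + c *s x"
    unfolding x y by (simp add: algebra_simps vw ev vf ve fv ee ff ef fe)
  also have "\<dots> = (-(b*c)) *s 1 + c *s x + b *s y" unfolding one by (simp add: algebra_simps)
  finally show ?thesis by (rule in3I)
qed

lemma excl23:
  assumes D: "\<And>a b c. \<exists>z. z \<notin> span {a,b,c}"
    and sub2: "subspace V2" and ds2: "direct_sum2 (line scale 1) V2" and VV2: "\<forall>v\<in>V2. \<forall>w\<in>V2. v*w = 0"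
    and ds3: "direct_sum3 (line scale e) (line scale f) V3"
    and eV: "\<forall>v\<in>V3. e*v = 0" and Vf: "\<forall>v\<in>V3. v*f = 0"
    and ee: "e*e = e" and ef1: "e + f = 1"
  shows False
proof -
  obtain c n where en: "e = c *s 1 + n" and n: "n \<in> V2" using ds2_ex[OF ds2] by blast
  have nn: "n*n = 0" using VV2 n by blast
  have "e = (c*c) *s 1 + (c *s n + c *s n)"
    using ee unfolding en by (simp add: algebra_simps nn)
  moreover have "c *s n + c *s n \<in> V2" using sub2 n by (simp add: subspace_add subspace_scale)
  ultimately have u: "c *s 1 = (c*c) *s 1 \<and> n = c *s n + c *s n"
  proof -
    assume e2: "e = (c*c) *s 1 + (c *s n + c *s n)" and m: "c *s n + c *s n \<in> V2"
    have ex: "\<exists>!p. fst p \<in> line scale 1 \<and> snd p \<in> V2 \<and> e = fst p + snd p"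
      using ds2 unfolding direct_sum2_def by blast
    have q1: "fst (c *s 1, n) \<in> line scale 1 \<and> snd (c *s 1, n) \<in> V2 \<and> e = fst (c *s 1, n) + snd (c *s 1, n)"
      using en n by (auto simp: line_def)
    have q2: "fst ((c*c) *s 1, c *s n + c *s n) \<in> line scale 1 \<and> snd ((c*c) *s 1, c *s n + c *s n) \<in> V2
       \<and> e = fst ((c*c) *s 1, c *s n + c *s n) + snd ((c*c) *s 1, c *s n + c *s n)"
      using e2 m by (auto simp: line_def)
    have "(c *s 1, n) = ((c*c) *s 1, c *s n + c *s n)" using ex q1 q2 by blast
    thus ?thesis by simp
  qed
  hence "c = c*c" by simp
  hence "c = 0 \<or> c = 1" by (metis mult_cancel_left1 mult_zero_right)
  hence e01: "e = 0 \<or> e = 1"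
  proof
    assume "c = 0" thus ?thesis using u en by simp
  next
    assume c1: "c = 1"
    hence "n = n + n" using u by simp
    hence "n = 0" by simp
    thus ?thesis using en c1 by simp
  qed
  obtain z where z: "z \<notin> span {1,1,1}" using D by blast
  obtain a b v where zz: "z = a *s e + b *s f + v" and v: "v \<in> V3" using ds3_ex[OF ds3] by blast
  from e01 show False
  proof
    assume "e = 0"
    hence f1: "f = 1" using ef1 by simp
    hence "v = 0" using Vf v by auto
    hence "z = b *s 1" using zz f1 \<open>e = 0\<close> by simp
    thus False using z span1 by auto
  next
    assume "e = 1"
    hence f1: "f = 0" using ef1 by simp
    hence "v = 0" using eV v \<open>e = 1\<close> by auto
    hence "z = a *s 1" using zz f1 \<open>e = 1\<close> by simp
    thus False using z span1 by auto
  qed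
qed

lemma notP1:
  assumes "\<And>x y. x*y \<in> span {1,x,y}"
  shows "\<not> 4 \<le> dim {1,x,y,x*y}"
proof -
  have "{1,x,y,x*y} \<subseteq> span {1,x,y}" using assms by (auto intro: span_base)
  hence "dim {1,x,y,x*y} \<le> card {1,x,y}" by (rule dim_le_card) simp
  also have "card {1,x,y} \<le> 3" by (auto simp: card_insert_if)
  finally show ?thesis by simp
qed

end

theorem theorem5p7:
  fixes scale :: "'a::field \<Rightarrow> 'b::ring_1 \<Rightarrow> 'b"
  assumes alg: "k_algebra scale"
    and dim4: "dim_ge scale 4"
  defines "P1 \<equiv> (\<exists>x y :: 'b. vector_space.dim scale {1, x, y, x * y} \<ge> 4)"
    and "P2 \<equiv> (\<exists>V :: 'b set. module.subspace scale V
                 \<and> direct_sum2 (line scale 1) V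
                 \<and> (\<forall>v\<in>V. \<forall>w\<in>V. v * w = 0))"
    and "P3 \<equiv> (\<exists>(V :: 'b set) e f. module.subspace scale V
                 \<and> direct_sum3 (line scale e) (line scale f) V
                 \<and> (\<forall>v\<in>V. \<forall>w\<in>V. v * w = 0)
                 \<and> (\<forall>v\<in>V. e * v = 0) \<and> (\<forall>v\<in>V. v * f = 0)
                 \<and> e * e = e \<and> f * f = f \<and> e * f = 0 \<and> f * e = 0 \<and> e + f = 1)"
  shows "(P1 \<and> \<not> P2 \<and> \<not> P3) \<or> (\<not> P1 \<and> P2 \<and> \<not> P3) \<or> (\<not> P1 \<and> \<not> P2 \<and> P3)"
proof -
  have Dz: "\<And>a b c. \<exists>z. z \<notin> module.span scale {a,b,c}" using k_algebra.D[OF alg dim4] by blast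
  have star_nP1: "\<not> P1" if st: "\<And>x y. x*y \<in> module.span scale {1,x,y}"
    using k_algebra.notP1[OF alg st] unfolding P1_def by blast
  have nP1_star: "x*y \<in> module.span scale {1,x,y}" if n: "\<not> P1" for x y
  proof -
    have "\<forall>x y. \<not> 4 \<le> vector_space.dim scale {1,x,y,x*y}" using n unfolding P1_def by blast
    thus ?thesis using k_algebra.star[OF alg Dz] by blast
  qed
  have P2n: "\<not> P1" if P2
  proof -
    from \<open>P2\<close> obtain V where "direct_sum2 (line scale 1) V" "\<forall>v\<in>V. \<forall>w\<in>V. v * w = 0"
      unfolding P2_def by blast
    thus ?thesis using star_nP1 k_algebra.P2_star[OF alg] by blast
  qed
  have P3n: "\<not> P1" if P3
  proof -
    from \<open>P3\<close> obtain V e f where "direct_sum3 (line scale e) (line scale f) V"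
      "\<forall>v\<in>V. \<forall>w\<in>V. v*w = 0" "\<forall>v\<in>V. e*v = 0" "\<forall>v\<in>V. v*f = 0"
      "e*e = e" "f*f = f" "e*f = 0" "f*e = 0" "e + f = 1"
      unfolding P3_def by blast
    thus ?thesis using star_nP1 k_algebra.P3_star[OF alg] by blast
  qed
  have n23: "\<not> (P2 \<and> P3)"
  proof
    assume "P2 \<and> P3"
    then obtain V2 V3 e f where "module.subspace scale V2" "direct_sum2 (line scale 1) V2"
      "\<forall>v\<in>V2. \<forall>w\<in>V2. v * w = 0" "direct_sum3 (line scale e) (line scale f) V3"
      "\<forall>v\<in>V3. e*v = 0" "\<forall>v\<in>V3. v*f = 0" "e*e = e" "e + f = 1"
      unfolding P2_def P3_def by blast
    thus False using k_algebra.excl23[OF alg Dz] by blast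
  qed
  have main: "P2 \<or> P3" if n: "\<not> P1"
  proof -
    have st: "\<And>x y. x*y \<in> module.span scale {1,x,y}" using nP1_star n by blast
    show ?thesis
    proof (cases "\<exists>e. e*e = e \<and> e \<notin> module.span scale {1}")
      case True
      then obtain e where "e*e = e" "e \<notin> module.span scale {1}" by blast
      from k_algebra.caseB[OF alg st Dz this] have P3 unfolding P3_def by blast
      thus ?thesis ..
    next
      case False
      hence "\<And>e. e*e = e \<Longrightarrow> e \<in> module.span scale {1}" by blast
      from k_algebra.caseA[OF alg st Dz this] have P2 unfolding P2_def by blast
      thus ?thesis ..
    qed
  qed
  show ?thesis using P2n P3n n23 main by blast
qed

end
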